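(* Let $A\in\mathbb{R}^{n\times m}$ with $n<m$ have nonzero columns $\alpha_1,\dots,\alpha_m$, let $c_{ij}=\langle\alpha_i,\alpha_j\rangle$, and for each $i\in[m]$ define $\nu(i)=\max_{j\neq i}\frac{|c_{ij}|}{c_{ii}}$ and $\rho(i)=\frac{\nu(i)}{\nu(i)+1}$. Let $\rho(i_1)\ge\rho(i_2)\ge\dots\ge\rho(i_m)$ be these scores sorted in non-increasing order, and let $l^*$ be the largest integer $l\in\{0,1,\dots,m\}$ such that $\sum_{j=1}^{l}\rho(i_j)<\frac12$ (equivalently, when it exists, $l^*=\min\{l:\sum_{j=1}^l\rho(i_j)\ge\frac12\}-1$). Then every $x\in\mathbb{R}^m$ with $\|x\|_0\le l^*$ is the unique minimizer of $\min_{z\in\mathbb{R}^m}\|z\|_1$ subject to $Az=Ax$; that is, the sparsity level $SL$ of $\ell_1$ minimization with sensing matrix $A$ satisfies $SL\ge l^*$.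
   Context: $[m]=\{1,\dots,m\}$; $\|x\|_0$ is the number of nonzero entries of $x$. The sparsity level $SL$ of $A$ is the largest integer $s$ such that every $x$ with $\|x\|_0\le s$ is correctly (uniquely) recovered as the minimizer of $\min\|z\|_1$ s.t. $Az=Ax$. *)

theory Defs
  imports "HOL-Analysis.Analysis"
begin

definition l0norm :: "real ^ 'm \<Rightarrow> nat" where
  "l0norm x = card {i. x $ i \<noteq> 0}"

definition l1norm :: "real ^ 'm \<Rightarrow> real" where
  "l1norm x = (\<Sum>i\<in>UNIV. \<bar>x $ i\<bar>)"

definition l1_unique_recovery :: "real ^ 'm ^ 'n \<Rightarrow> real ^ 'm \<Rightarrow> bool" where
  "l1_unique_recovery A x \<longleftrightarrow>
     (\<forall>z. A *v z = A *v x \<and> z \<noteq> x \<longrightarrow> l1norm x < l1norm z)"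

definition gram :: "real ^ 'm ^ 'n \<Rightarrow> 'm \<Rightarrow> 'm \<Rightarrow> real" where
  "gram A i j = column i A \<bullet> column j A"

definition nu :: "real ^ 'm ^ 'n \<Rightarrow> 'm \<Rightarrow> real" where
  "nu A i = Max {\<bar>gram A i j\<bar> / gram A i i | j. j \<noteq> i}"

definition rho :: "real ^ 'm ^ 'n \<Rightarrow> 'm \<Rightarrow> real" where
  "rho A i = nu A i / (nu A i + 1)"

end

theory Submission
  imports Defs
begin

lemma mv_cols: "(A::real^'m^'n) *v h = (\<Sum>j\<in>UNIV. h$j *\<^sub>R column j A)"
  by (simp add: vec_eq_iff matrix_vector_mult_def column_def sum_component mult.commute)

lemma ker_eq:
  fixes A :: "real^'m^'n"
  assumes "A *v h = 0"
  shows "(\<Sum>j\<in>UNIV. h$j * gram A i j) = 0"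
proof -
  have "column i A \<bullet> (A *v h) = 0" using assms by simp
  thus ?thesis unfolding mv_cols gram_def by (simp add: inner_sum_right)
qed

lemma antitone_f:
  fixes f :: "nat \<Rightarrow> real"
  assumes "\<forall>j. Suc j < M \<longrightarrow> f (Suc j) \<le> f j"
  shows "i \<le> j \<Longrightarrow> j < M \<Longrightarrow> f j \<le> f i"
proof (induction j)
  case 0 thus ?case by simp
next
  case (Suc j)
  show ?case
  proof (cases "i = Suc j")
    case False
    hence "i \<le> j" using Suc by simp
    hence "f j \<le> f i" using Suc by simp
    moreover have "f (Suc j) \<le> f j" using assms Suc by simp
    ultimately show ?thesis by simp
  qed simp
qed

lemma topk:
  fixes f :: "nat \<Rightarrow> real"
  assumes mono: "\<And>i j. i \<le> j \<Longrightarrow> j < M \<Longrightarrow> f j \<le> f i"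
  shows "T \<subseteq> {..<M} \<Longrightarrow> card T = k \<Longrightarrow> sum f T \<le> sum f {..<k}"
proof (induction k arbitrary: T)
  case 0
  have "finite T" using 0 finite_subset by blast
  thus ?case using 0 by simp
next
  case (Suc k)
  have fin: "finite T" using Suc finite_subset by blast
  have ne: "T \<noteq> {}" using Suc by auto
  define t where "t = Max T"
  have tT: "t \<in> T" using fin ne t_def by simp
  have "T \<subseteq> {..t}" unfolding t_def using Max_ge[OF fin] by blast
  hence "card T \<le> card {..t}" by (intro card_mono) auto
  hence "card T \<le> Suc t" by simp
  hence kt: "k \<le> t" using Suc by simp
  have tM: "t < M" using tT Suc by auto
  have "sum f (T - {t}) \<le> sum f {..<k}"
    using Suc.IH[of "T - {t}"] Suc.prems tT fin by auto
  moreover have "f t \<le> f k" using mono kt tM by simp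
  moreover have "sum f T = sum f (T - {t}) + f t" using fin tT
    by (simp add: sum.remove)
  ultimately show ?case by simp
qed

theorem corollary1:
  fixes A :: "real ^ 'm ^ 'n"
    and s :: "nat \<Rightarrow> 'm"
    and x :: "real ^ 'm"
  assumes "CARD('n) < CARD('m)"
    and "\<forall>i. column i A \<noteq> 0"
    and "bij_betw s {..<CARD('m)} UNIV"
    and "\<forall>j. Suc j < CARD('m) \<longrightarrow> rho A (s (Suc j)) \<le> rho A (s j)"
    and "l0norm x \<le> (GREATEST l. l \<le> CARD('m) \<and> (\<Sum>j<l. rho A (s j)) < 1/2)"
  shows "l1_unique_recovery A x"
proof -
  define M where "M = CARD('m)"
  define L where "L = (GREATEST l. l \<le> CARD('m) \<and> (\<Sum>j<l. rho A (s j)) < 1/2)"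
  have Lp: "L \<le> M \<and> (\<Sum>j<L. rho A (s j)) < 1/2"
    unfolding L_def M_def
    by (rule GreatestI_nat[where k=0 and b="CARD('m)"]) auto
  have M2: "M \<ge> 2"
  proof -
    have "0 < CARD('n)" by simp
    thus ?thesis using assms(1) unfolding M_def by linarith
  qed
  have cii: "gram A i i > 0" for i
    using assms(2) unfolding gram_def by simp
  have ex_other: "\<exists>j. j \<noteq> (i::'m)" for i
  proof (rule ccontr)
    assume "\<not> ?thesis"
    hence "UNIV = {i}" by auto
    hence "M = 1" unfolding M_def by (simp only: \<open>UNIV = {i}\<close>) simp
    thus False using M2 by simp
  qed
  have setfin: "finite {\<bar>gram A i j\<bar> / gram A i i | j. j \<noteq> i}" for i
  proof -
    have "{\<bar>gram A i j\<bar> / gram A i i | j. j \<noteq> i} = (\<lambda>j. \<bar>gram A i j\<bar> / gram A i i) ` {j. j \<noteq> i}"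
      by auto
    thus ?thesis by simp
  qed
  have nu_ge: "j \<noteq> i \<Longrightarrow> \<bar>gram A i j\<bar> / gram A i i \<le> nu A i" for i j
    unfolding nu_def using setfin by (intro Max_ge) auto
  have nu_nn: "nu A i \<ge> 0" for i
    using ex_other[of i] nu_ge cii by (meson divide_nonneg_pos abs_ge_zero order_trans)
  have rho_nn: "rho A i \<ge> 0" for i
    unfolding rho_def using nu_nn by simp
  have key: "\<bar>h$i\<bar> \<le> rho A i * l1norm h" if Ah: "A *v h = 0" for h i
  proof -
    have e: "(\<Sum>j\<in>UNIV. h$j * gram A i j) = 0" using ker_eq[OF Ah] .
    have "(\<Sum>j\<in>UNIV. h$j * gram A i j) = h$i * gram A i i + (\<Sum>j\<in>UNIV-{i}. h$j * gram A i j)"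
      by (simp add: sum.remove)
    hence "h$i * gram A i i = - (\<Sum>j\<in>UNIV-{i}. h$j * gram A i j)" using e by simp
    hence "\<bar>h$i\<bar> * gram A i i = \<bar>\<Sum>j\<in>UNIV-{i}. h$j * gram A i j\<bar>"
      using cii[of i] by (metis abs_minus_cancel abs_mult abs_of_pos)
    also have "\<dots> \<le> (\<Sum>j\<in>UNIV-{i}. \<bar>h$j\<bar> * \<bar>gram A i j\<bar>)"
      using sum_abs[of "\<lambda>j. h$j * gram A i j" "UNIV-{i}"] by (simp add: abs_mult)
    also have "\<dots> \<le> (\<Sum>j\<in>UNIV-{i}. \<bar>h$j\<bar> * (nu A i * gram A i i))"
    proof (rule sum_mono)
      fix j assume "j \<in> UNIV - {i}"
      hence "\<bar>gram A i j\<bar> / gram A i i \<le> nu A i" using nu_ge by auto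
      hence "\<bar>gram A i j\<bar> \<le> nu A i * gram A i i" using cii[of i]
        by (simp add: pos_divide_le_eq)
      thus "\<bar>h$j\<bar> * \<bar>gram A i j\<bar> \<le> \<bar>h$j\<bar> * (nu A i * gram A i i)"
        by (simp add: mult_left_mono)
    qed
    also have "\<dots> = (\<Sum>j\<in>UNIV-{i}. \<bar>h$j\<bar>) * nu A i * gram A i i"
      by (simp add: sum_distrib_right mult.assoc)
    finally have "\<bar>h$i\<bar> * gram A i i \<le> ((\<Sum>j\<in>UNIV-{i}. \<bar>h$j\<bar>) * nu A i) * gram A i i" .
    hence "\<bar>h$i\<bar> \<le> (\<Sum>j\<in>UNIV-{i}. \<bar>h$j\<bar>) * nu A i"
      using cii[of i] by (rule mult_right_le_imp_le)
    moreover have "l1norm h = \<bar>h$i\<bar> + (\<Sum>j\<in>UNIV-{i}. \<bar>h$j\<bar>)"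
      unfolding l1norm_def by (simp add: sum.remove)
    ultimately have "\<bar>h$i\<bar> \<le> (l1norm h - \<bar>h$i\<bar>) * nu A i" by simp
    hence "\<bar>h$i\<bar> * (nu A i + 1) \<le> nu A i * l1norm h" by (simp add: algebra_simps)
    thus ?thesis unfolding rho_def using nu_nn[of i]
      by (simp add: pos_le_divide_eq mult.commute)
  qed
  define S where "S = {i. x $ i \<noteq> 0}"
  have cardS: "card S \<le> L" using assms(5) unfolding S_def L_def l0norm_def by simp
  have rhoS: "(\<Sum>i\<in>S. rho A i) < 1/2"
  proof -
    define T where "T = {j\<in>{..<M}. s j \<in> S}"
    have inj: "inj_on s {..<M}" using assms(3) unfolding M_def bij_betw_def by simp
    have ST: "S = s ` T" unfolding T_def using assms(3) unfolding M_def bij_betw_def by auto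
    have injT: "inj_on s T" using inj unfolding T_def by (rule inj_on_subset) auto
    have "(\<Sum>i\<in>S. rho A i) = (\<Sum>j\<in>T. rho A (s j))" unfolding ST
      using sum.reindex[OF injT] by simp
    also have "\<dots> \<le> (\<Sum>j<card T. rho A (s j))"
      apply (rule topk[where M=M])
      using antitone_f[of M "\<lambda>j. rho A (s j)"] assms(4) unfolding M_def T_def by auto
    also have "\<dots> \<le> (\<Sum>j<L. rho A (s j))"
    proof -
      have "card T = card S" unfolding ST using card_image[OF injT] by simp
      hence "{..<card T} \<subseteq> {..<L}" using cardS by auto
      thus ?thesis by (intro sum_mono2) (auto simp: rho_nn)
    qed
    finally show ?thesis using Lp by simp
  qed
  show ?thesis unfolding l1_unique_recovery_def
  proof (intro allI impI)
    fix z assume zz: "A *v z = A *v x \<and> z \<noteq> x"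
    define h where "h = z - x"
    have Ah: "A *v h = 0" using zz unfolding h_def by (simp add: matrix_vector_mult_diff_distrib)
    have hnz: "h \<noteq> 0" using zz unfolding h_def by simp
    then obtain k where "h$k \<noteq> 0" by (metis vec_eq_iff zero_index)
    hence "0 < \<bar>h$k\<bar>" by simp
    also have "\<bar>h$k\<bar> \<le> l1norm h" unfolding l1norm_def
      by (rule member_le_sum) auto
    finally have hpos: "l1norm h > 0" .
    have hS: "(\<Sum>i\<in>S. \<bar>h$i\<bar>) \<le> (\<Sum>i\<in>S. rho A i) * l1norm h"
      unfolding sum_distrib_right by (rule sum_mono) (rule key[OF Ah])
    also have "\<dots> < 1/2 * l1norm h" using rhoS hpos by (simp add: mult_strict_right_mono)
    finally have hS2: "(\<Sum>i\<in>S. \<bar>h$i\<bar>) < 1/2 * l1norm h" .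
    have spl: "sum f UNIV = sum f S + sum f (-S)" for f :: "'m \<Rightarrow> real"
    proof -
      have "sum f UNIV = sum f (UNIV - S) + sum f S" by (rule sum.subset_diff) auto
      thus ?thesis by (simp add: Compl_eq_Diff_UNIV)
    qed
    have split: "l1norm h = (\<Sum>i\<in>S. \<bar>h$i\<bar>) + (\<Sum>i\<in>-S. \<bar>h$i\<bar>)"
      unfolding l1norm_def by (rule spl)
    have xn: "l1norm x = (\<Sum>i\<in>S. \<bar>x$i\<bar>)"
      unfolding l1norm_def S_def by (rule sum.mono_neutral_right) auto
    have z1: "l1norm z = (\<Sum>i\<in>S. \<bar>z$i\<bar>) + (\<Sum>i\<in>-S. \<bar>z$i\<bar>)"
      unfolding l1norm_def by (rule spl)
    have z2: "(\<Sum>i\<in>-S. \<bar>z$i\<bar>) = (\<Sum>i\<in>-S. \<bar>h$i\<bar>)"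
      unfolding h_def S_def by (intro sum.cong) auto
    have z3: "(\<Sum>i\<in>S. \<bar>z$i\<bar>) \<ge> (\<Sum>i\<in>S. \<bar>x$i\<bar> - \<bar>h$i\<bar>)"
      unfolding h_def by (intro sum_mono) auto
    have "l1norm z \<ge> l1norm x - (\<Sum>i\<in>S. \<bar>h$i\<bar>) + (\<Sum>i\<in>-S. \<bar>h$i\<bar>)"
      using z1 z2 z3 unfolding xn sum_subtractf by simp
    thus "l1norm x < l1norm z" using split hS2 by simp
  qed
qed

end
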